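(* In the setting described in the context, let $q\in\{1,\dots,n\}$. The following are equivalent: (1) there exists a $q$-maxitive capacity $\mu:2^{\mathcal C}\to L$ with $S_\mu(x^{(k)})=\alpha^{(k)}$ for all $k\in\{1,\dots,N\}$; (2) the reduced system $(S_q)$ is consistent and there exists $A\subseteq\mathcal C$ with $|A|=q$ and $e_q(A)=1$.
   Context: Let $\mathcal C=\{1,\dots,n\}$ and let $L$ be either a finite totally ordered set $0=\xi_1<\dots<\xi_l=1$ or $L=[0,1]$. A capacity is a map $\mu:2^{\mathcal C}\to L$ with $\mu(\emptyset)=0$, $\mu(\mathcal C)=1$, monotone for inclusion; it is $q$-maxitive if for all $X$ with $|X|>q$, $\mu(X)=\max_{Y\subsetneq X,\ |Y|\le q}\mu(Y)$. Sugeno integral: $S_\mu(x)=\max_{A\subseteq\mathcal C}\min(\min_{i\in A}x_i,\mu(A))$ with $\min_{i\in\emptyset}x_i=1$. Training data: $N$ pairs $(x^{(k)},\alpha^{(k)})$, $x^{(k)}\in L^n$, $\alpha^{(k)}\in L$. For nonempty $A$, $m_{k,A}=\min_{i\in A}x^{(k)}_i$. The reduced system $(S_q)$ has unknowns $\xi_A\in L$ for $A\subseteq\mathcal C$ with $0<|A|\le q$, and equations $\max_{0<|A|\le q}\min(m_{k,A},\xi_A)=\alpha^{(k)}$, $k=1,\dots,N$; it is consistent if it has a solution in $L$. For $0<|A|\le q$, $e_q(A)=\min_{1\le k\le N}(m_{k,A}\to_G\alpha^{(k)})$, where $a\to_G b=1$ if $a\le b$ and $a\to_G b=b$ otherwise.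 *)

theory Defs
  imports Complex_Main
begin

text \<open>The scale L is modelled as a subset of the reals: either a finite chain
containing 0 and 1 inside [0,1], or the whole interval [0,1].\<close>
definition valid_scale :: "real set \<Rightarrow> bool" where
  "valid_scale L \<longleftrightarrow> 0 \<in> L \<and> 1 \<in> L \<and> L \<subseteq> {0..1} \<and> (finite L \<or> L = {0..1})"

definition crit :: "nat \<Rightarrow> nat set" where
  "crit n = {1..n}"

definition minx :: "(nat \<Rightarrow> real) \<Rightarrow> nat set \<Rightarrow> real" where
  "minx x A = (if A = {} then 1 else Min (x ` A))"

definition capacity :: "real set \<Rightarrow> nat \<Rightarrow> (nat set \<Rightarrow> real) \<Rightarrow> bool" where
  "capacity L n mu \<longleftrightarrow>
     (\<forall>A. A \<subseteq> crit n \<longrightarrow> mu A \<in> L) \<and> mu {} = 0 \<and> mu (crit n) = 1 \<and>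
     (\<forall>A B. A \<subseteq> B \<and> B \<subseteq> crit n \<longrightarrow> mu A \<le> mu B)"

definition q_maxitive :: "nat \<Rightarrow> nat \<Rightarrow> (nat set \<Rightarrow> real) \<Rightarrow> bool" where
  "q_maxitive n q mu \<longleftrightarrow>
     (\<forall>X. X \<subseteq> crit n \<and> card X > q \<longrightarrow> mu X = Max {mu Y | Y. Y \<subset> X \<and> card Y \<le> q})"

definition sugeno :: "nat \<Rightarrow> (nat set \<Rightarrow> real) \<Rightarrow> (nat \<Rightarrow> real) \<Rightarrow> real" where
  "sugeno n mu x = Max {min (minx x A) (mu A) | A. A \<subseteq> crit n}"

definition goedel_imp :: "real \<Rightarrow> real \<Rightarrow> real" where
  "goedel_imp a b = (if a \<le> b then 1 else b)"

text \<open>Subsets A of C with 0 < |A| \<le> q (the unknowns of the reduced system).\<close>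
definition small_sets :: "nat \<Rightarrow> nat \<Rightarrow> nat set set" where
  "small_sets n q = {A. A \<subseteq> crit n \<and> 0 < card A \<and> card A \<le> q}"

text \<open>Consistency of the reduced system (S_q); data x k i (k-th example, criterion i), alpha k.\<close>
definition reduced_consistent ::
  "real set \<Rightarrow> nat \<Rightarrow> nat \<Rightarrow> nat \<Rightarrow> (nat \<Rightarrow> nat \<Rightarrow> real) \<Rightarrow> (nat \<Rightarrow> real) \<Rightarrow> bool" where
  "reduced_consistent L n q N x alpha \<longleftrightarrow>
     (\<exists>\<xi> :: nat set \<Rightarrow> real.
        (\<forall>A \<in> small_sets n q. \<xi> A \<in> L) \<and>
        (\<forall>k \<in> {1..N}. Max {min (minx (x k) A) (\<xi> A) | A. A \<in> small_sets n q} = alpha k))"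

text \<open>e_q(A) = min over k of (m_{k,A} \<rightarrow>_G alpha_k); the empty minimum (N = 0) is 1,
 the top of L (all implication values lie in [0,1]).\<close>
definition e_q :: "nat \<Rightarrow> (nat \<Rightarrow> nat \<Rightarrow> real) \<Rightarrow> (nat \<Rightarrow> real) \<Rightarrow> nat set \<Rightarrow> real" where
  "e_q N x alpha A = Min (insert 1 {goedel_imp (minx (x k) A) (alpha k) | k. k \<in> {1..N}})"

end

theory Submission
  imports Defs
begin

lemma crit_fin[simp]: "finite (crit n)" by (simp add: crit_def)
lemma card_crit[simp]: "card (crit n) = n" by (simp add: crit_def)

lemma small_fin: "finite (small_sets n q)"
  unfolding small_sets_def by (rule finite_subset[of _ "Pow (crit n)"]) auto

lemma small_fin2: "finite {f A | A. A \<in> small_sets n q}"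
  using small_fin by (simp add: Setcompr_eq_image)

lemma small_fin3: "finite {f Y | Y. Y \<in> small_sets n q \<and> Y \<subseteq> X}"
proof -
  have "finite {Y. Y \<in> small_sets n q \<and> Y \<subseteq> X}"
    by (rule finite_subset[OF _ small_fin[of n q]]) auto
  then show ?thesis by (rule finite_image_set)
qed

lemma crit_fin2: "finite {f A | A. A \<subseteq> crit n}"
proof -
  have "finite {A. A \<subseteq> crit n}" by simp
  then show ?thesis by (rule finite_image_set)
qed

lemma minx_bounds:
  assumes "A \<subseteq> crit n" "\<forall>i\<in>crit n. xv i \<in> L" "L \<subseteq> {0..1}"
  shows "0 \<le> minx xv A \<and> minx xv A \<le> 1"
proof (cases "A = {}")
  case True thus ?thesis by (simp add: minx_def)
next
  case False
  have fin: "finite A" using assms(1) finite_subset crit_fin by blast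
  have "Min (xv ` A) \<in> xv ` A" using fin False by simp
  then obtain i where "i\<in>A" "Min (xv`A) = xv i" by auto
  moreover have "xv i \<in> L" using assms(1,2) \<open>i\<in>A\<close> by (meson subsetD)
  then have "xv i \<in> {0..1}" using assms(3) by (meson subsetD)
  ultimately show ?thesis using False by (simp add: minx_def)
qed

lemma minx_anti: "Z \<noteq> {} \<Longrightarrow> Z \<subseteq> A \<Longrightarrow> finite A \<Longrightarrow> minx xv A \<le> minx xv Z"
  unfolding minx_def by (auto intro!: Min_antimono image_mono)

theorem theorem2:
  fixes L :: "real set" and n q N :: nat
    and x :: "nat \<Rightarrow> nat \<Rightarrow> real" and alpha :: "nat \<Rightarrow> real"
  assumes "valid_scale L"
    and "1 \<le> q" and "q \<le> n"
    and "\<forall>k \<in> {1..N}. \<forall>i \<in> crit n. x k i \<in> L"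
    and "\<forall>k \<in> {1..N}. alpha k \<in> L"
  shows "(\<exists>mu. capacity L n mu \<and> q_maxitive n q mu \<and>
            (\<forall>k \<in> {1..N}. sugeno n mu (x k) = alpha k))
     \<longleftrightarrow> (reduced_consistent L n q N x alpha \<and>
          (\<exists>A. A \<subseteq> crit n \<and> card A = q \<and> e_q N x alpha A = 1))"
proof -
  have L01: "L \<subseteq> {0..1}" "0 \<in> L" "1 \<in> L" using assms(1) by (auto simp: valid_scale_def)
  have mx: "\<And>k A. k \<in> {1..N} \<Longrightarrow> A \<subseteq> crit n \<Longrightarrow> 0 \<le> minx (x k) A \<and> minx (x k) A \<le> 1"
    using minx_bounds assms(4) L01(1) by blast
  have alpha01: "\<And>k. k \<in> {1..N} \<Longrightarrow> 0 \<le> alpha k \<and> alpha k \<le> 1"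
  proof -
    fix k assume "k \<in> {1..N}"
    then have "alpha k \<in> L" using assms(5) by simp
    then have "alpha k \<in> {0..1}" using L01(1) by (meson subsetD)
    then show "0 \<le> alpha k \<and> alpha k \<le> 1" by simp
  qed
  have one_small: "{1} \<in> small_sets n q" using assms(2,3) by (auto simp: small_sets_def crit_def)
  have small_sub: "\<And>A. A \<in> small_sets n q \<Longrightarrow> A \<subseteq> crit n \<and> A \<noteq> {} \<and> card A \<le> q"
    by (auto simp: small_sets_def)
  show ?thesis
  proof
    assume "\<exists>mu. capacity L n mu \<and> q_maxitive n q mu \<and> (\<forall>k \<in> {1..N}. sugeno n mu (x k) = alpha k)"
    then obtain mu where cap: "capacity L n mu" and qm: "q_maxitive n q mu"
      and sug: "\<forall>k \<in> {1..N}. sugeno n mu (x k) = alpha k" by blast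
    have muL: "\<And>A. A \<subseteq> crit n \<Longrightarrow> mu A \<in> L" and mu0: "mu {} = 0" and muC: "mu (crit n) = 1"
      and mumono: "\<And>A B. A \<subseteq> B \<Longrightarrow> B \<subseteq> crit n \<Longrightarrow> mu A \<le> mu B"
      using cap by (auto simp: capacity_def)
    have mu01: "\<And>A. A \<subseteq> crit n \<Longrightarrow> 0 \<le> mu A \<and> mu A \<le> 1"
    proof -
      fix A assume "A \<subseteq> crit n"
      then have "mu A \<in> {0..1}" using muL L01(1) by (meson subsetD)
      then show "0 \<le> mu A \<and> mu A \<le> 1" by simp
    qed
    have red: "Max {min (minx (x k) A) (mu A) | A. A \<in> small_sets n q} = alpha k" if k: "k \<in> {1..N}" for k
    proof -
      define S where "S = {min (minx (x k) A) (mu A) | A. A \<subseteq> crit n}"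
      define T where "T = {min (minx (x k) A) (mu A) | A. A \<in> small_sets n q}"
      have finS: "finite S" unfolding S_def by (rule crit_fin2)
      have finT: "finite T" unfolding T_def by (rule small_fin2)
      have TS: "T \<subseteq> S" unfolding S_def T_def using small_sub by blast
      have t1: "min (minx (x k) {1}) (mu {1}) \<in> T" unfolding T_def using one_small by blast
      have Tne: "T \<noteq> {}" using t1 by blast
      have T0: "0 \<le> Max T"
      proof -
        have "0 \<le> min (minx (x k) {1}) (mu {1})" using mx[OF k] mu01 small_sub[OF one_small] by simp
        also have "\<dots> \<le> Max T" using t1 finT by simp
        finally show ?thesis .
      qed
      have "Max S \<le> Max T"
      proof (rule Max.boundedI[OF finS])
        show "S \<noteq> {}" unfolding S_def by blast
      next
        fix a assume "a \<in> S"
        then obtain A where A: "A \<subseteq> crit n" "a = min (minx (x k) A) (mu A)" unfolding S_def by blast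
        have finA: "finite A" using A(1) finite_subset crit_fin by blast
        show "a \<le> Max T"
        proof (cases "A = {}")
          case True then show ?thesis using A mu0 T0 by (simp add: minx_def)
        next
          case ne: False
          show ?thesis
          proof (cases "card A \<le> q")
            case True
            then have "A \<in> small_sets n q" using A ne finA by (auto simp: small_sets_def)
            then have "a \<in> T" unfolding T_def using A by blast
            then show ?thesis using finT by simp
          next
            case False
            define M where "M = {mu Y | Y. Y \<subset> A \<and> card Y \<le> q}"
            have "mu A = Max M" using qm A(1) False unfolding q_maxitive_def M_def by auto
            moreover have "finite M"
            proof -
              have "M \<subseteq> mu ` Pow A" unfolding M_def by auto
              then show ?thesis using finA finite_subset by blast
            qed
            moreover have "M \<noteq> {}" unfolding M_def using ne by auto
            ultimately have "mu A \<in> M" using Max_in by simp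
            then obtain Y where Y: "Y \<subset> A" "card Y \<le> q" "mu A = mu Y" unfolding M_def by blast
            show ?thesis
            proof (cases "Y = {}")
              case True
              then have "a \<le> 0" using A Y mu0 by simp
              then show ?thesis using T0 by simp
            next
              case Yne: False
              have finY: "finite Y" using Y(1) finA finite_subset by blast
              have Ys: "Y \<in> small_sets n q" using Y A Yne finY
                by (auto simp: small_sets_def card_gt_0_iff)
              have "a \<le> min (minx (x k) Y) (mu Y)"
                using A Y minx_anti[OF Yne _ finA, of "x k"] by auto
              also have "\<dots> \<le> Max T" using Ys unfolding T_def by (intro Max_ge small_fin2) blast
              finally show ?thesis .
            qed
          qed
        qed
      qed
      moreover have "Max T \<le> Max S" using Max_mono[OF TS Tne finS] .
      moreover have "Max S = alpha k" using sug k unfolding S_def sugeno_def by simp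
      ultimately show ?thesis unfolding T_def by simp
    qed
    have rc: "reduced_consistent L n q N x alpha"
      unfolding reduced_consistent_def
    proof (intro exI[of _ mu] conjI ballI)
      fix A assume "A \<in> small_sets n q" then show "mu A \<in> L" using muL small_sub by blast
    next
      fix k assume "k \<in> {1..N}" then show "Max {min (minx (x k) A) (mu A) | A. A \<in> small_sets n q} = alpha k"
        by (rule red)
    qed
    obtain Y where Y: "Y \<subseteq> crit n" "card Y \<le> q" "mu Y = 1"
    proof (cases "q = n")
      case True then show ?thesis using that[of "crit n"] muC by simp
    next
      case False
      define M where "M = {mu Y | Y. Y \<subset> crit n \<and> card Y \<le> q}"
      have "mu (crit n) = Max M" using qm False assms(3) unfolding q_maxitive_def M_def by auto
      moreover have "finite M"
      proof -
        have "M \<subseteq> mu ` Pow (crit n)" unfolding M_def by auto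
        then show ?thesis by (rule finite_subset) simp
      qed
      moreover have "M \<noteq> {}"
      proof -
        have "{} \<subset> crit n" using assms(2,3) by (auto simp: crit_def)
        then have "mu {} \<in> M" unfolding M_def by (intro CollectI exI[of _ "{}"]) simp
        then show ?thesis by blast
      qed
      ultimately have "mu (crit n) \<in> M" by (metis Max_in)
      then obtain Y where "Y \<subset> crit n" "card Y \<le> q" "mu (crit n) = mu Y" unfolding M_def by blast
      then show ?thesis using that[of Y] muC by simp
    qed
    obtain B where B: "B \<subseteq> crit n - Y" "card B = q - card Y"
    proof -
      have "q - card Y \<le> card (crit n - Y)" using Y assms(3) by (simp add: card_Diff_subset finite_subset)
      then show ?thesis using that obtain_subset_with_card_n by metis
    qed
    define A where "A = Y \<union> B"
    have finY: "finite Y" using Y(1) by (rule finite_subset) simp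
    have finB: "finite B" using B(1) by (rule finite_subset) simp
    have dj: "Y \<inter> B = {}" using B(1) by blast
    have A: "A \<subseteq> crit n" "card A = q" using B Y unfolding A_def
      by (auto simp: card_Un_disjoint[OF finY finB dj])
    have muA: "mu A = 1" using mumono[of Y A] mu01[of A] A Y unfolding A_def by auto
    have "e_q N x alpha A = 1"
    proof -
      have "{goedel_imp (minx (x k) A) (alpha k) | k. k \<in> {1..N}} \<subseteq> {1}"
      proof
        fix z assume "z \<in> {goedel_imp (minx (x k) A) (alpha k) | k. k \<in> {1..N}}"
        then obtain k where k: "k \<in> {1..N}" "z = goedel_imp (minx (x k) A) (alpha k)" by blast
        have "min (minx (x k) A) (mu A) \<le> sugeno n mu (x k)"
          unfolding sugeno_def using A(1) by (intro Max_ge crit_fin2) blast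
        then have "minx (x k) A \<le> alpha k" using sug k muA mx[OF k(1) A(1)] by simp
        then show "z \<in> {1}" using k by (simp add: goedel_imp_def)
      qed
      then have "insert 1 {goedel_imp (minx (x k) A) (alpha k) | k. k \<in> {1..N}} = {1}" by blast
      then show ?thesis unfolding e_q_def by (metis Min_singleton)
    qed
    then show "reduced_consistent L n q N x alpha \<and> (\<exists>A. A \<subseteq> crit n \<and> card A = q \<and> e_q N x alpha A = 1)"
      using rc A by blast
  next
    assume "reduced_consistent L n q N x alpha \<and> (\<exists>A. A \<subseteq> crit n \<and> card A = q \<and> e_q N x alpha A = 1)"
    then obtain xi A0 where xiL: "\<forall>A \<in> small_sets n q. xi A \<in> L"
      and eq: "\<forall>k \<in> {1..N}. Max {min (minx (x k) A) (xi A) | A. A \<in> small_sets n q} = alpha k"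
      and A0: "A0 \<subseteq> crit n" "card A0 = q" "e_q N x alpha A0 = 1"
      unfolding reduced_consistent_def by blast
    have A0s: "A0 \<in> small_sets n q" using A0 assms(2) by (auto simp: small_sets_def)
    have minA0: "minx (x k) A0 \<le> alpha k" if k: "k \<in> {1..N}" for k
    proof (rule ccontr)
      assume c: "\<not> ?thesis"
      have mem: "goedel_imp (minx (x k) A0) (alpha k) \<in> insert 1 {goedel_imp (minx (x j) A0) (alpha j) | j. j \<in> {1..N}}"
        using k by blast
      have fin: "finite (insert 1 {goedel_imp (minx (x j) A0) (alpha j) | j. j \<in> {1..N}})"
        by (intro finite_insert[THEN iffD2] finite_image_set) simp
      have "Min (insert 1 {goedel_imp (minx (x j) A0) (alpha j) | j. j \<in> {1..N}}) \<le> goedel_imp (minx (x k) A0) (alpha k)"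
        using Min_le[OF fin mem] .
      then have "1 \<le> alpha k" using A0(3) c unfolding e_q_def goedel_imp_def by simp
      then show False using c mx[OF k A0(1)] by simp
    qed
    define xi' where "xi' = xi(A0 := 1)"
    have xi'L: "\<And>A. A \<in> small_sets n q \<Longrightarrow> xi' A \<in> L \<and> 0 \<le> xi' A \<and> xi' A \<le> 1"
      using xiL L01 unfolding xi'_def by auto
    have eq': "Max {min (minx (x k) A) (xi' A) | A. A \<in> small_sets n q} = alpha k" if k: "k \<in> {1..N}" for k
    proof -
      define T where "T = {min (minx (x k) A) (xi A) | A. A \<in> small_sets n q}"
      define T' where "T' = {min (minx (x k) A) (xi' A) | A. A \<in> small_sets n q}"
      have finT: "finite T" unfolding T_def by (rule small_fin2)
      have finT': "finite T'" unfolding T'_def by (rule small_fin2)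
      have MT: "Max T = alpha k" using eq k unfolding T_def by simp
      have "Max T' = alpha k"
      proof (rule Max_eqI[OF finT'])
        fix y assume "y \<in> T'"
        then obtain A where A: "A \<in> small_sets n q" "y = min (minx (x k) A) (xi' A)" unfolding T'_def by blast
        show "y \<le> alpha k"
        proof (cases "A = A0")
          case True then show ?thesis using A minA0[OF k] by simp
        next
          case False
          then have "y \<in> T" using A unfolding T_def xi'_def by auto
          then show ?thesis using MT Max_ge[OF finT] by metis
        qed
      next
        have "T \<noteq> {}" unfolding T_def using one_small by blast
        then have "Max T \<in> T" using finT by simp
        then have "alpha k \<in> T" using MT by simp
        then obtain B where B: "B \<in> small_sets n q" "alpha k = min (minx (x k) B) (xi B)"
          unfolding T_def by blast
        show "alpha k \<in> T'"
        proof (cases "B = A0")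
          case True
          then have "alpha k = min (minx (x k) B) (xi' B)"
            using B minA0[OF k] mx[OF k A0(1)] unfolding xi'_def by auto
          then show ?thesis unfolding T'_def using B by blast
        next
          case False
          then show ?thesis unfolding T'_def using B unfolding xi'_def by auto
        qed
      qed
      then show ?thesis unfolding T'_def .
    qed
    define mu where "mu X = Max (insert 0 {xi' Y | Y. Y \<in> small_sets n q \<and> Y \<subseteq> X})" for X
    have mu_ge: "\<And>X Y. Y \<in> small_sets n q \<Longrightarrow> Y \<subseteq> X \<Longrightarrow> xi' Y \<le> mu X"
      unfolding mu_def by (intro Max_ge finite_insert[THEN iffD2] small_fin3) blast+
    have mu_ge0: "\<And>X. 0 \<le> mu X"
      unfolding mu_def by (intro Max_ge finite_insert[THEN iffD2] small_fin3) blast+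
    have mu_cases: "mu X = 0 \<or> (\<exists>Y \<in> small_sets n q. Y \<subseteq> X \<and> mu X = xi' Y)" for X
    proof -
      have "mu X \<in> insert 0 {xi' Y | Y. Y \<in> small_sets n q \<and> Y \<subseteq> X}"
        unfolding mu_def by (intro Max_in finite_insert[THEN iffD2] small_fin3) auto
      then show ?thesis by blast
    qed
    have mu_le1: "mu X \<le> 1" and muL: "mu X \<in> L" for X
    proof -
      have "mu X \<in> L \<and> mu X \<le> 1"
      proof (cases "mu X = 0")
        case True then show ?thesis using L01 by simp
      next
        case False
        then obtain Y where "Y \<in> small_sets n q" "mu X = xi' Y" using mu_cases[of X] by blast
        then show ?thesis using xi'L[of Y] by simp
      qed
      then show "mu X \<le> 1" "mu X \<in> L" by simp_all
    qed
    have mu_mono: "mu X \<le> mu X'" if XX: "X \<subseteq> X'" for X X'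
    proof (cases "mu X = 0")
      case True then show ?thesis using mu_ge0[of X'] by simp
    next
      case False
      then obtain Y where Y: "Y \<in> small_sets n q" "Y \<subseteq> X" "mu X = xi' Y" using mu_cases[of X] by blast
      have "Y \<subseteq> X'" using Y(2) XX by (rule order.trans)
      then show ?thesis using mu_ge[OF Y(1)] Y(3) by simp
    qed
    have mu0: "mu {} = 0"
    proof -
      have "{xi' Y | Y. Y \<in> small_sets n q \<and> Y \<subseteq> {}} = {}" using small_sub by blast
      then show ?thesis unfolding mu_def by simp
    qed
    have muC: "mu (crit n) = 1"
      using mu_ge[OF A0s A0(1)] mu_le1[of "crit n"] unfolding xi'_def by simp
    have cap: "capacity L n mu" unfolding capacity_def
      by (intro conjI allI impI muL mu0 muC) (auto intro: mu_mono)
    have qm: "q_maxitive n q mu" unfolding q_maxitive_def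
    proof (intro allI impI)
      fix X assume X: "X \<subseteq> crit n \<and> q < card X"
      have finX: "finite X" using conjunct1[OF X] by (rule finite_subset) simp
      define M where "M = {mu Y | Y. Y \<subset> X \<and> card Y \<le> q}"
      have "Max M = mu X"
      proof (rule Max_eqI)
        have "M \<subseteq> mu ` Pow X" unfolding M_def by auto
        then show "finite M" by (rule finite_subset) (simp add: finX)
      next
        fix y assume "y \<in> M"
        then obtain Y where "Y \<subset> X" "y = mu Y" unfolding M_def by blast
        then show "y \<le> mu X" using mu_mono[of Y X] by simp
      next
        show "mu X \<in> M"
        proof (cases "mu X = 0")
          case True
          have "X \<noteq> {}" using X assms(2) by auto
          then have "{} \<subset> X" by blast
          then show ?thesis unfolding M_def using True mu0 by (intro CollectI exI[of _ "{}"]) simp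
        next
          case False
          then obtain Y where Y: "Y \<in> small_sets n q" "Y \<subseteq> X" "mu X = xi' Y" using mu_cases by blast
          have "card Y \<le> q" using small_sub[OF Y(1)] by simp
          then have "Y \<subset> X" using Y(2) X by auto
          moreover have "mu Y = mu X" using mu_ge[OF Y(1), of Y] mu_mono[OF Y(2)] Y(3) by simp
          ultimately show ?thesis unfolding M_def using \<open>card Y \<le> q\<close> by (intro CollectI exI[of _ Y]) simp
        qed
      qed
      then show "mu X = Max M" by simp
    qed
    have sug: "sugeno n mu (x k) = alpha k" if k: "k \<in> {1..N}" for k
    proof -
      define T' where "T' = {min (minx (x k) A) (xi' A) | A. A \<in> small_sets n q}"
      have finT': "finite T'" unfolding T'_def by (rule small_fin2)
      have MT: "Max T' = alpha k" using eq'[OF k] unfolding T'_def .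
      have bound: "min (minx (x k) A) (mu A) \<le> alpha k" if A: "A \<subseteq> crit n" for A
      proof (cases "mu A = 0")
        case True then show ?thesis using mx[OF k A] alpha01[OF k] by simp
      next
        case False
        then obtain Y where Y: "Y \<in> small_sets n q" "Y \<subseteq> A" "mu A = xi' Y" using mu_cases by blast
        have finA: "finite A" using A by (rule finite_subset) simp
        have "min (minx (x k) A) (mu A) \<le> min (minx (x k) Y) (xi' Y)"
          using Y(3) minx_anti[OF _ Y(2) finA, of "x k"] small_sub[OF Y(1)] by (simp add: min.coboundedI1 min_le_iff_disj)
        also have "\<dots> \<le> Max T'" using Y(1) unfolding T'_def by (intro Max_ge small_fin2) blast
        finally show ?thesis using MT by simp
      qed
      show ?thesis unfolding sugeno_def
      proof (rule Max_eqI)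
        show "finite {min (minx (x k) A) (mu A) | A. A \<subseteq> crit n}" by (rule crit_fin2)
      next
        fix y assume "y \<in> {min (minx (x k) A) (mu A) | A. A \<subseteq> crit n}"
        then show "y \<le> alpha k" using bound by blast
      next
        have "T' \<noteq> {}" unfolding T'_def using one_small by blast
        then have "Max T' \<in> T'" using finT' by simp
        then have "alpha k \<in> T'" using MT by simp
        then obtain B where B: "B \<in> small_sets n q" "alpha k = min (minx (x k) B) (xi' B)"
          unfolding T'_def by blast
        have "alpha k \<le> min (minx (x k) B) (mu B)" using B mu_ge[OF B(1), of B] by auto
        moreover have "min (minx (x k) B) (mu B) \<le> alpha k" using bound small_sub[OF B(1)] by blast
        ultimately have "alpha k = min (minx (x k) B) (mu B)" by (intro order_antisym) simp_all
        then show "alpha k \<in> {min (minx (x k) A) (mu A) | A. A \<subseteq> crit n}" using small_sub[OF B(1)] by blast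
      qed
    qed
    show "\<exists>mu. capacity L n mu \<and> q_maxitive n q mu \<and> (\<forall>k \<in> {1..N}. sugeno n mu (x k) = alpha k)"
      using cap qm sug by blast
  qed
qed

end
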